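(* For an $r$-graph $H$, $C_r(n,H)$ is bounded (for all $n$) by a constant $C(H)$ depending only on $H$ if and only if $H$ is not $2$-locally large.
   Context: An $r$-graph is an $r$-uniform hypergraph; $K_n^{(r)}$ is the complete $r$-graph on $n$ vertices. A copy of an $r$-graph $H$ in $K_n^{(r)}$ is a subhypergraph isomorphic to $H$. An $(n,r,H)$-local coloring with $k$ colors is a family of edge-colorings $f_v:E(K_n^{(r)})\to[k]$, one per vertex $v$, such that for every copy $T$ of $H$ there is $u\in V(T)$ with $f_u$ injective on $E(T)$. $C_r(n,H)$ is the minimum such $k$. Let $H$ be an $r$-graph on $m$ vertices and $\sigma:V(H)\to[m]$ a bijection. For $x\in V(H)$ and $1\le i\le r$, $T_x^i$ is the set of edges $e\ni x$ such that $\sigma(x)$ is the $i$-th smallest of the values $\sigma(v)$, $v\in e$. For $r+1\le i\le 2r+1$, $T_x^i$ is the set of edges $e\not\ni x$ such that $\sigma(x)$ is the $(i-r)$-th smallest among the values $\sigma(v)$, $v\in e\cup\{x\}$. (The sets $T_x^1,\dots,T_x^{2r+1}$ partition $E(H)$.) $H$ is $2$-locally large if there exists a bijection $\sigma:V(H)\to[m]$ such that for every vertex $x\in V(H)$ some $T_x^i$, $i\in[2r+1]$, contains at least two edges. *)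

theory Defs
  imports Main
begin

definition r_graph :: "nat \<Rightarrow> 'a set \<Rightarrow> 'a set set \<Rightarrow> bool" where
  "r_graph r V E \<longleftrightarrow> finite V \<and> (\<forall>e\<in>E. e \<subseteq> V \<and> card e = r)"

definition complete_edges :: "nat \<Rightarrow> nat \<Rightarrow> nat set set" where
  "complete_edges n r = {e. e \<subseteq> {0..<n} \<and> card e = r}"

text \<open>Copies of H in K_n^(r) are exactly the images of injective maps phi : V -> {0..<n}
  (vertex set phi ` V, edge set (image phi) ` E).\<close>
definition local_coloring ::
  "nat \<Rightarrow> nat \<Rightarrow> 'a set \<Rightarrow> 'a set set \<Rightarrow> nat \<Rightarrow> (nat \<Rightarrow> nat set \<Rightarrow> nat) \<Rightarrow> bool" where
  "local_coloring n r V E k f \<longleftrightarrow>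
     (\<forall>v\<in>{0..<n}. \<forall>e\<in>complete_edges n r. f v e \<in> {1..k}) \<and>
     (\<forall>\<phi>. inj_on \<phi> V \<and> \<phi> ` V \<subseteq> {0..<n} \<longrightarrow>
        (\<exists>u\<in>\<phi> ` V. inj_on (f u) ((\<lambda>e. \<phi> ` e) ` E)))"

definition C_r :: "nat \<Rightarrow> nat \<Rightarrow> 'a set \<Rightarrow> 'a set set \<Rightarrow> nat" where
  "C_r r n V E = (LEAST k. \<exists>f. local_coloring n r V E k f)"

definition T_class :: "nat \<Rightarrow> 'a set set \<Rightarrow> ('a \<Rightarrow> nat) \<Rightarrow> 'a \<Rightarrow> nat \<Rightarrow> 'a set set" where
  "T_class r E \<sigma> x i =
     (if 1 \<le> i \<and> i \<le> r then
        {e\<in>E. x \<in> e \<and> card {v\<in>e. \<sigma> v < \<sigma> x} + 1 = i}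
      else if r + 1 \<le> i \<and> i \<le> 2*r + 1 then
        {e\<in>E. x \<notin> e \<and> card {v\<in>e \<union> {x}. \<sigma> v < \<sigma> x} + 1 = i - r}
      else {})"

definition two_locally_large :: "nat \<Rightarrow> 'a set \<Rightarrow> 'a set set \<Rightarrow> bool" where
  "two_locally_large r V E \<longleftrightarrow>
     (\<exists>\<sigma>. bij_betw \<sigma> V {1..card V} \<and>
        (\<forall>x\<in>V. \<exists>i\<in>{1..2*r+1}. \<exists>e1 e2. e1 \<noteq> e2 \<and> e1 \<in> T_class r E \<sigma> x i \<and> e2 \<in> T_class r E \<sigma> x i))"

end

theory Submission
  imports Defs "HOL-Library.Ramsey"
begin

definition pos :: "nat set \<Rightarrow> nat \<Rightarrow> nat" where
  "pos S y = card {z\<in>S. z < y}"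

definition elem :: "nat set \<Rightarrow> nat \<Rightarrow> nat" where
  "elem S j = inv_into S (pos S) j"

lemma pos_mono:
  assumes "finite S" "y1 \<in> S" "y1 < y2"
  shows "pos S y1 < pos S y2"
  unfolding pos_def
proof (rule psubset_card_mono)
  show "finite {z \<in> S. z < y2}" using assms by simp
  show "{z \<in> S. z < y1} \<subset> {z \<in> S. z < y2}" using assms by auto
qed

lemma pos_less_iff:
  assumes "finite S" "a \<in> S" "b \<in> S"
  shows "pos S a < pos S b \<longleftrightarrow> a < b"
  by (metis assms not_less_iff_gr_or_eq pos_mono order_less_asym)

lemma pos_less_card:
  assumes "finite S" "y \<in> S"
  shows "pos S y < card S"
  unfolding pos_def using assms by (intro psubset_card_mono) auto

lemma pos_bij:
  assumes "finite S"
  shows "bij_betw (pos S) S {..<card S}"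
proof -
  have inj: "inj_on (pos S) S"
    by (rule inj_onI) (metis assms pos_less_iff not_less_iff_gr_or_eq)
  have sub: "pos S ` S \<subseteq> {..<card S}" using pos_less_card assms by auto
  have "card (pos S ` S) = card {..<card S}" using card_image[OF inj] by simp
  then have "pos S ` S = {..<card S}" using sub by (intro card_subset_eq) auto
  then show ?thesis using inj by (simp add: bij_betw_def)
qed

lemma elem_pos:
  assumes "finite S" "y \<in> S"
  shows "elem S (pos S y) = y"
  unfolding elem_def using pos_bij[OF assms(1)] assms(2)
  by (simp add: bij_betw_def inv_into_f_f)

lemma elem_in:
  assumes "finite S" "j < card S"
  shows "elem S j \<in> S"
  unfolding elem_def using pos_bij[OF assms(1)] assms(2)
  by (metis bij_betw_def inv_into_into lessThan_iff)

lemma pos_elem: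
  assumes "finite S" "j < card S"
  shows "pos S (elem S j) = j"
  unfolding elem_def using pos_bij[OF assms(1)] assms(2)
  by (metis bij_betw_def f_inv_into_f lessThan_iff)

definition tidx :: "nat \<Rightarrow> ('a \<Rightarrow> nat) \<Rightarrow> 'a \<Rightarrow> 'a set \<Rightarrow> nat" where
  "tidx r \<sigma> x e = (if x \<in> e then card {v\<in>e. \<sigma> v < \<sigma> x} + 1
                    else r + card {v\<in>e \<union> {x}. \<sigma> v < \<sigma> x} + 1)"

lemma tidx_T:
  assumes "r_graph r V E" "e \<in> E"
  shows "tidx r \<sigma> x e \<in> {1..2*r+1} \<and> e \<in> T_class r E \<sigma> x (tidx r \<sigma> x e)"
proof -
  have fe: "finite e" "card e = r" using assms unfolding r_graph_def
    by (auto intro: finite_subset)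
  show ?thesis
  proof (cases "x \<in> e")
    case True
    have "{v\<in>e. \<sigma> v < \<sigma> x} \<subset> e" using True by auto
    then have "card {v\<in>e. \<sigma> v < \<sigma> x} < r" using fe psubset_card_mono by metis
    then show ?thesis using True assms(2) by (auto simp: tidx_def T_class_def)
  next
    case False
    have "card {v\<in>e \<union> {x}. \<sigma> v < \<sigma> x} \<le> card (e \<union> {x})"
      using fe by (intro card_mono) auto
    also have "\<dots> = r + 1" using fe False by simp
    finally have "card {v\<in>e \<union> {x}. \<sigma> v < \<sigma> x} \<le> r + 1" .
    moreover have "card {v\<in>e \<union> {x}. \<sigma> v < \<sigma> x} \<noteq> r + 1"
    proof
      assume "card {v\<in>e \<union> {x}. \<sigma> v < \<sigma> x} = r + 1"
      then have "{v\<in>e \<union> {x}. \<sigma> v < \<sigma> x} = e \<union> {x}"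
        using fe False by (intro card_subset_eq) auto
      then show False by auto
    qed
    ultimately show ?thesis using False assms(2) by (auto simp: tidx_def T_class_def)
  qed
qed

lemma T_tidx:
  assumes "e \<in> T_class r E \<sigma> x i"
  shows "e \<in> E \<and> i = tidx r \<sigma> x e"
  using assms by (auto simp: tidx_def T_class_def split: if_splits)

lemma tidx_transfer:
  assumes inj: "inj_on \<phi> V" and ord: "\<forall>v\<in>V. \<forall>y\<in>V. \<sigma> v < \<sigma> y \<longleftrightarrow> \<phi> v < \<phi> y"
    and "e \<subseteq> V" "x \<in> V"
  shows "tidx r (\<lambda>z. z) (\<phi> x) (\<phi> ` e) = tidx r \<sigma> x e"
proof -
  have c: "card {z\<in>\<phi> ` A. z < \<phi> x} = card {v\<in>A. \<sigma> v < \<sigma> x}" if "A \<subseteq> V" for A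
  proof -
    have "{z\<in>\<phi> ` A. z < \<phi> x} = \<phi> ` {v\<in>A. \<sigma> v < \<sigma> x}"
      using that ord assms(4) by auto
    moreover have "inj_on \<phi> {v\<in>A. \<sigma> v < \<sigma> x}" using inj that by (blast intro: inj_on_subset)
    ultimately show ?thesis by (simp add: card_image)
  qed
  have mem: "\<phi> x \<in> \<phi> ` e \<longleftrightarrow> x \<in> e" using inj_on_image_mem_iff[OF inj assms(4) assms(3)] .
  have u: "\<phi> ` e \<union> {\<phi> x} = \<phi> ` (e \<union> {x})" by auto
  show ?thesis unfolding tidx_def mem u using c[OF assms(3)] c[of "e \<union> {x}"] assms by auto
qed

lemma C_r_le:
  assumes "local_coloring n r V E k f"
  shows "C_r r n V E \<le> k"
  unfolding C_r_def using assms by (intro Least_le) blast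

lemma coloring_exists:
  assumes "r_graph r V E" "V \<noteq> {}"
  shows "\<exists>k f. local_coloring n r V E k f"
proof -
  have fin: "finite (complete_edges n r)" unfolding complete_edges_def
    by (rule finite_subset[of _ "Pow {0..<n}"]) auto
  obtain h where h: "bij_betw h (complete_edges n r) {0..<card (complete_edges n r)}"
    using ex_bij_betw_finite_nat[OF fin] by blast
  define f where "f = (\<lambda>(v::nat) e. h e + 1)"
  have "local_coloring n r V E (card (complete_edges n r)) f"
    unfolding local_coloring_def
  proof (intro conjI allI impI ballI)
    fix v e assume "e \<in> complete_edges n r"
    then have "h e \<in> {0..<card (complete_edges n r)}" using h by (meson bij_betwE)
    then show "f v e \<in> {1..card (complete_edges n r)}"
      unfolding f_def by auto
  next
    fix \<phi> assume \<phi>: "inj_on \<phi> V \<and> \<phi> ` V \<subseteq> {0..<n}"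
    obtain x0 where "x0 \<in> V" using assms(2) by blast
    have sub: "(\<lambda>e. \<phi> ` e) ` E \<subseteq> complete_edges n r"
    proof
      fix y assume "y \<in> (\<lambda>e. \<phi> ` e) ` E"
      then obtain e where e: "e \<in> E" "y = \<phi> ` e" by blast
      have "e \<subseteq> V" "card e = r" using e assms(1) unfolding r_graph_def by auto
      moreover then have "inj_on \<phi> e" using \<phi> by (blast intro: inj_on_subset)
      ultimately show "y \<in> complete_edges n r" using e \<phi>
        unfolding complete_edges_def by (auto simp: card_image)
    qed
    have "inj_on (f (\<phi> x0)) (complete_edges n r)"
      using h unfolding f_def bij_betw_def inj_on_def by auto
    then have "inj_on (f (\<phi> x0)) ((\<lambda>e. \<phi> ` e) ` E)"
      using sub by (rule inj_on_subset)
    then show "\<exists>u\<in>\<phi> ` V. inj_on (f u) ((\<lambda>e. \<phi> ` e) ` E)" using \<open>x0 \<in> V\<close> by blast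
  qed
  then show ?thesis by blast
qed

lemma C_r_coloring:
  assumes "r_graph r V E" "V \<noteq> {}"
  shows "\<exists>f. local_coloring n r V E (C_r r n V E) f"
  unfolding C_r_def using coloring_exists[OF assms] by (rule LeastI_ex)

lemma rank_bij:
  assumes inj: "inj_on (\<phi>::'a \<Rightarrow> nat) V" and fin: "finite V"
  defines "\<sigma> \<equiv> (\<lambda>x. pos (\<phi> ` V) (\<phi> x) + 1)"
  shows "bij_betw \<sigma> V {1..card V}"
    and "\<forall>v\<in>V. \<forall>y\<in>V. \<sigma> v < \<sigma> y \<longleftrightarrow> \<phi> v < \<phi> y"
proof -
  have b1: "bij_betw \<phi> V (\<phi> ` V)" using inj by (simp add: bij_betw_imageI)
  have b2: "bij_betw (pos (\<phi> ` V)) (\<phi> ` V) {..<card V}"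
    using pos_bij[of "\<phi> ` V"] fin card_image[OF inj] by simp
  have b3: "bij_betw (\<lambda>j. j + 1) {..<card V} {1..card V}"
  proof (rule bij_betw_imageI)
    show "inj_on (\<lambda>j. j + 1) {..<card V}" by (simp add: inj_on_def)
    have "(\<lambda>j. j + 1) ` {..<card V} = Suc ` {..<card V}" by simp
    also have "\<dots> = {1..card V}" by (rule image_Suc_lessThan)
    finally show "(\<lambda>j. j + 1) ` {..<card V} = {1..card V}" .
  qed
  have "bij_betw ((\<lambda>j. j + 1) \<circ> (pos (\<phi> ` V) \<circ> \<phi>)) V {1..card V}"
    using bij_betw_trans[OF bij_betw_trans[OF b1 b2] b3] .
  then show "bij_betw \<sigma> V {1..card V}" by (simp add: \<sigma>_def comp_def)
  show "\<forall>v\<in>V. \<forall>y\<in>V. \<sigma> v < \<sigma> y \<longleftrightarrow> \<phi> v < \<phi> y"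
    using pos_less_iff[of "\<phi> ` V"] fin by (simp add: \<sigma>_def)
qed

lemma dir1:
  assumes G: "r_graph r V E" and ne: "V \<noteq> {}" and nl: "\<not> two_locally_large r V E"
  shows "C_r r n V E \<le> 2*r+1"
proof (rule C_r_le)
  have finV: "finite V" using G by (simp add: r_graph_def)
  show "local_coloring n r V E (2*r+1) (tidx r (\<lambda>z. z))"
    unfolding local_coloring_def
  proof (intro conjI allI impI ballI)
    fix v e assume "e \<in> complete_edges n r"
    then have "r_graph r {0..<n} {e}" unfolding complete_edges_def r_graph_def by auto
    then show "tidx r (\<lambda>z. z) v e \<in> {1..2*r+1}" using tidx_T[of r "{0..<n}" "{e}" e "\<lambda>z. z" v] by simp
  next
    fix \<phi> assume \<phi>: "inj_on \<phi> V \<and> \<phi> ` V \<subseteq> {0..<n}"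
    define \<sigma> where "\<sigma> = (\<lambda>x. pos (\<phi> ` V) (\<phi> x) + 1)"
    have sb: "bij_betw \<sigma> V {1..card V}"
      unfolding \<sigma>_def by (rule rank_bij(1)[OF conjunct1[OF \<phi>] finV])
    have ord: "\<forall>v\<in>V. \<forall>y\<in>V. \<sigma> v < \<sigma> y \<longleftrightarrow> \<phi> v < \<phi> y"
      unfolding \<sigma>_def by (rule rank_bij(2)[OF conjunct1[OF \<phi>] finV])
    have nq: "\<not> (\<forall>x\<in>V. \<exists>i\<in>{1..2*r+1}. \<exists>e1 e2. e1 \<noteq> e2 \<and> e1 \<in> T_class r E \<sigma> x i \<and> e2 \<in> T_class r E \<sigma> x i)"
      using nl sb unfolding two_locally_large_def by blast
    obtain x where x: "x \<in> V" and
      ax: "\<forall>i\<in>{1..2*r+1}. \<forall>e1 e2. e1 \<in> T_class r E \<sigma> x i \<and> e2 \<in> T_class r E \<sigma> x i \<longrightarrow> e1 = e2"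
      using nq by (metis (no_types, lifting))
    have "inj_on (tidx r (\<lambda>z. z) (\<phi> x)) ((\<lambda>e. \<phi> ` e) ` E)"
    proof (rule inj_onI, clarify)
      fix e1 e2 assume e: "e1 \<in> E" "e2 \<in> E"
        and eq: "tidx r (\<lambda>z. z) (\<phi> x) (\<phi> ` e1) = tidx r (\<lambda>z. z) (\<phi> x) (\<phi> ` e2)"
      have sub: "e1 \<subseteq> V" "e2 \<subseteq> V" using e G unfolding r_graph_def by auto
      have "tidx r \<sigma> x e1 = tidx r \<sigma> x e2"
        using eq tidx_transfer[of \<phi> V \<sigma>] \<phi> ord sub x by simp
      moreover have "tidx r \<sigma> x e1 \<in> {1..2*r+1}" "e1 \<in> T_class r E \<sigma> x (tidx r \<sigma> x e1)"
        "e2 \<in> T_class r E \<sigma> x (tidx r \<sigma> x e2)"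
        using tidx_T[OF G e(1), of \<sigma> x] tidx_T[OF G e(2), of \<sigma> x] by auto
      ultimately have "e1 = e2" using ax by metis
      then show "\<phi> ` e1 = \<phi> ` e2" by simp
    qed
    then show "\<exists>u\<in>\<phi> ` V. inj_on (tidx r (\<lambda>z. z) u) ((\<lambda>e. \<phi> ` e) ` E)" using x by blast
  qed
qed


lemma card_transfer:
  assumes inj: "inj_on \<phi> V" and ord: "\<forall>v\<in>V. \<forall>y\<in>V. \<sigma> v < \<sigma> y \<longleftrightarrow> \<phi> v < (\<phi> y::nat)"
    and "A \<subseteq> V" "x \<in> V"
  shows "card {z\<in>\<phi> ` A. z < \<phi> x} = card {v\<in>A. \<sigma> v < \<sigma> x}"
proof -
  have "{z\<in>\<phi> ` A. z < \<phi> x} = \<phi> ` {v\<in>A. \<sigma> v < \<sigma> x}"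
    using assms by auto
  moreover have "inj_on \<phi> {v\<in>A. \<sigma> v < \<sigma> x}" using inj assms(3) by (blast intro: inj_on_subset)
  ultimately show ?thesis by (simp add: card_image)
qed

lemma dir2:
  assumes G: "r_graph r V E" and ne: "V \<noteq> {}" and ll: "two_locally_large r V E"
  shows "\<not> (\<exists>C::nat. \<forall>n. C_r r n V E \<le> C)"
proof
  assume "\<exists>C::nat. \<forall>n. C_r r n V E \<le> C"
  then obtain k where kb: "\<forall>n. C_r r n V E \<le> k" by blast
  obtain \<sigma> where sb: "bij_betw \<sigma> V {1..card V}" and
    ax: "\<forall>x\<in>V. \<exists>i\<in>{1..2*r+1}. \<exists>e1 e2. e1 \<noteq> e2 \<and> e1 \<in> T_class r E \<sigma> x i \<and> e2 \<in> T_class r E \<sigma> x i"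
    using ll unfolding two_locally_large_def by blast
  have finV: "finite V" using G by (simp add: r_graph_def)
  define m where "m = card V"
  define Lists where "Lists = {xs. set xs \<subseteq> {..k} \<and> length xs = (r+1)*(r+1)}"
  have finL: "finite Lists" unfolding Lists_def by (rule finite_lists_length_eq) simp
  obtain g where g: "bij_betw g Lists {0..<card Lists}" using ex_bij_betw_finite_nat[OF finL] by blast
  define L where "L = card Lists"
  obtain N :: nat where N: "partn_lst {..<N} (replicate L (m+1)) (r+1)" using ramsey_full[of "replicate L (m+1)" "r+1"] by blast
  obtain f where f: "local_coloring N r V E (C_r r N V E) f" using C_r_coloring[OF G ne] by blast
  define ent where "ent = (\<lambda>S (jl::nat\<times>nat). f (elem S (fst jl)) (S - {elem S (snd jl)}))"
  define lst where "lst = (\<lambda>S. map (ent S) (List.product [0..<r+1] [0..<r+1]))"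
  define c where "c = (\<lambda>S. g (lst S))"
  have lstL: "lst S \<in> Lists" if "S \<in> nsets {..<N} (r+1)" for S
  proof -
    have S: "S \<subseteq> {..<N}" "finite S" "card S = r+1" using that by (auto simp: nsets_def)
    have "ent S jl \<in> {..k}" if jlin: "jl \<in> set (List.product [0..<r+1] [0..<r+1])" for jl
    proof -
      obtain j l where jl: "jl = (j,l)" "j < r+1" "l < r+1"
      proof -
        obtain j l where "jl = (j,l)" by fastforce
        moreover have "jl \<in> {0..<r+1} \<times> {0..<r+1}" using jlin by (simp only: set_product set_upt)
        ultimately show ?thesis using that by auto
      qed
      have ej: "elem S j \<in> S" "elem S l \<in> S" using elem_in S jl by auto
      have "S - {elem S l} \<in> complete_edges N r" using S ej unfolding complete_edges_def by auto
      moreover have "elem S j \<in> {0..<N}" using ej S by auto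
      ultimately have "f (elem S j) (S - {elem S l}) \<in> {1..C_r r N V E}"
        using f unfolding local_coloring_def by blast
      then show ?thesis using kb[rule_format, of N] jl unfolding ent_def by auto
    qed
    then show ?thesis unfolding lst_def Lists_def by auto
  qed
  have cmap: "c \<in> nsets {..<N} (r+1) \<rightarrow> {..<length (replicate L (m+1))}"
  proof
    fix S assume "S \<in> nsets {..<N} (r+1)"
    then have "g (lst S) \<in> {0..<card Lists}" using lstL g by (meson bij_betwE)
    then show "c S \<in> {..<length (replicate L (m+1))}" unfolding c_def L_def by auto
  qed
  obtain idx Hs where idx: "idx < length (replicate L (m+1))"
    and Hs: "Hs \<in> nsets {..<N} (replicate L (m+1) ! idx)" and mono: "c ` nsets Hs (r+1) \<subseteq> {idx}"
    using partn_lstE[OF N cmap refl] by blast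
  have HsN: "Hs \<subseteq> {..<N}" "finite Hs" "card Hs = m+1" using Hs idx by (auto simp: nsets_def)
  define M where "M = Hs - {Max Hs}"
  have HsNe: "Hs \<noteq> {}" using HsN by auto
  have MaxH: "Max Hs \<in> Hs" using HsN HsNe by simp
  have finM: "finite M" and cardM: "card M = m" using HsN MaxH unfolding M_def by auto
  have Mless: "z < Max Hs" if "z \<in> M" for z
    using that HsN unfolding M_def by (simp add: order_le_neq_trans)
  define \<phi> where "\<phi> = (\<lambda>x. elem M (\<sigma> x - 1))"
  have \<sigma>r: "\<sigma> x - 1 < m" "\<sigma> x \<ge> 1" if "x \<in> V" for x
  proof -
    have "\<sigma> x \<in> {1..card V}" using sb that by (meson bij_betwE)
    then show "\<sigma> x - 1 < m" "\<sigma> x \<ge> 1" unfolding m_def by auto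
  qed
  have \<phi>M: "\<phi> x \<in> M" if "x \<in> V" for x
    using elem_in[OF finM] \<sigma>r[OF that] cardM unfolding \<phi>_def by auto
  have pos\<phi>: "pos M (\<phi> x) = \<sigma> x - 1" if "x\<in>V" for x
    using pos_elem[OF finM] \<sigma>r[OF that] cardM unfolding \<phi>_def by auto
  have ord: "\<forall>v\<in>V. \<forall>y\<in>V. \<sigma> v < \<sigma> y \<longleftrightarrow> \<phi> v < \<phi> y"
  proof (intro ballI)
    fix v y assume vy: "v\<in>V" "y\<in>V"
    then have "\<phi> v < \<phi> y \<longleftrightarrow> pos M (\<phi> v) < pos M (\<phi> y)" using pos_less_iff[OF finM] \<phi>M by simp
    moreover have "\<sigma> v \<ge> 1" "\<sigma> y \<ge> 1" using \<sigma>r vy by auto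
    ultimately show "\<sigma> v < \<sigma> y \<longleftrightarrow> \<phi> v < \<phi> y" using pos\<phi> vy by auto
  qed
  have inj\<phi>: "inj_on \<phi> V"
  proof (rule inj_onI)
    fix v y assume vy: "v\<in>V" "y\<in>V" "\<phi> v = \<phi> y"
    then have "\<sigma> v = \<sigma> y" using ord by (metis not_less_iff_gr_or_eq)
    then show "v = y" using sb vy unfolding bij_betw_def inj_on_def by blast
  qed
  have \<phi>N: "\<phi> ` V \<subseteq> {0..<N}" using \<phi>M HsN(1) unfolding M_def by fastforce
  obtain u where u: "u \<in> \<phi> ` V" and uinj: "inj_on (f u) ((\<lambda>e. \<phi> ` e) ` E)"
    using f inj\<phi> \<phi>N unfolding local_coloring_def by blast
  then obtain x where x: "x \<in> V" "u = \<phi> x" by blast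
  obtain i e1 e2 where i: "i \<in> {1..2*r+1}" "e1 \<noteq> e2" "e1 \<in> T_class r E \<sigma> x i" "e2 \<in> T_class r E \<sigma> x i"
    using ax x by blast
  have e1: "e1 \<in> E" "tidx r \<sigma> x e1 = i" using T_tidx[OF i(3)] by auto
  have e2: "e2 \<in> E" "tidx r \<sigma> x e2 = i" using T_tidx[OF i(4)] by auto
  define J where "J = (if i \<le> r then (i - 1, r) else (i - r - 1, i - r - 1))"
  have key: "\<exists>S. S \<in> nsets Hs (r+1) \<and> f (\<phi> x) (\<phi> ` e) = ent S J"
    if e: "e \<in> E" "tidx r \<sigma> x e = i" for e
  proof -
    have eV: "e \<subseteq> V" "card e = r" using G e unfolding r_graph_def by auto
    have fe: "finite e" using eV finV by (blast intro: finite_subset)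
    have inje: "inj_on \<phi> e" using inj\<phi> eV by (blast intro: inj_on_subset)
    have cphi: "card (\<phi> ` e) = r" using card_image[OF inje] eV by simp
    have \<phi>eM: "\<phi> ` e \<subseteq> M" using \<phi>M eV by auto
    show ?thesis
    proof (cases "x \<in> e")
      case True
      define S where "S = \<phi> ` e \<union> {Max Hs}"
      have notin: "Max Hs \<notin> \<phi> ` e" using \<phi>eM unfolding M_def by auto
      have cS: "finite S" "card S = r+1" using notin cphi fe unfolding S_def by auto
      have SH: "S \<subseteq> Hs" using \<phi>eM MaxH unfolding S_def M_def by auto
      have "{z\<in>S. z < Max Hs} = \<phi> ` e" using Mless \<phi>eM unfolding S_def by auto
      then have p1: "pos S (Max Hs) = r" unfolding pos_def using cphi by simp
      have "{z\<in>S. z < \<phi> x} = {z\<in>\<phi> ` e. z < \<phi> x}" using Mless[OF \<phi>M[OF x(1)]] unfolding S_def by auto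
      then have p2: "pos S (\<phi> x) = card {v\<in>e. \<sigma> v < \<sigma> x}"
        unfolding pos_def using card_transfer[OF inj\<phi> ord eV(1) x(1)] by simp
      have "{v\<in>e. \<sigma> v < \<sigma> x} \<subseteq> e - {x}" by auto
      then have "card {v\<in>e. \<sigma> v < \<sigma> x} \<le> card (e - {x})" using fe by (intro card_mono) auto
      also have "\<dots> = r - 1" using True fe eV by simp
      finally have cl: "card {v\<in>e. \<sigma> v < \<sigma> x} \<le> r - 1" .
      have iv: "i = card {v\<in>e. \<sigma> v < \<sigma> x} + 1" using e True by (simp add: tidx_def)
      have "r \<ge> 1" using True eV fe by (metis card_0_eq empty_iff less_one not_le)
      then have J: "J = (card {v\<in>e. \<sigma> v < \<sigma> x}, r)" using iv cl unfolding J_def by auto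
      have el1: "elem S (card {v\<in>e. \<sigma> v < \<sigma> x}) = \<phi> x"
        using elem_pos[OF cS(1), of "\<phi> x"] p2 True unfolding S_def by auto
      have el2: "elem S r = Max Hs"
        using elem_pos[OF cS(1), of "Max Hs"] p1 unfolding S_def by auto
      have "S - {Max Hs} = \<phi> ` e" using notin unfolding S_def by auto
      then have "ent S J = f (\<phi> x) (\<phi> ` e)" unfolding ent_def J using el1 el2 by simp
      moreover have "S \<in> nsets Hs (r+1)" using SH cS by (simp add: nsets_def)
      ultimately show ?thesis by metis
    next
      case False
      define S where "S = \<phi> ` (e \<union> {x})"
      have notin: "\<phi> x \<notin> \<phi> ` e" using inj_on_image_mem_iff[OF inj\<phi> x(1) eV(1)] False by simp
      have cS: "finite S" "card S = r+1" using notin cphi fe unfolding S_def by auto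
      have SH: "S \<subseteq> Hs" using \<phi>eM \<phi>M x unfolding S_def M_def by auto
      have ex: "e \<union> {x} \<subseteq> V" using eV x by auto
      have p2: "pos S (\<phi> x) = card {v\<in>e \<union> {x}. \<sigma> v < \<sigma> x}"
        unfolding pos_def S_def using card_transfer[OF inj\<phi> ord ex x(1)] by simp
      have iv: "i = r + card {v\<in>e \<union> {x}. \<sigma> v < \<sigma> x} + 1" using e False by (simp add: tidx_def)
      then have J: "J = (card {v\<in>e \<union> {x}. \<sigma> v < \<sigma> x}, card {v\<in>e \<union> {x}. \<sigma> v < \<sigma> x})"
        unfolding J_def by auto
      have el1: "elem S (card {v\<in>e \<union> {x}. \<sigma> v < \<sigma> x}) = \<phi> x"
        using elem_pos[OF cS(1), of "\<phi> x"] p2 unfolding S_def by auto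
      have "S - {\<phi> x} = \<phi> ` e" using notin unfolding S_def by auto
      then have "ent S J = f (\<phi> x) (\<phi> ` e)" unfolding ent_def J using el1 by simp
      moreover have "S \<in> nsets Hs (r+1)" using SH cS by (simp add: nsets_def)
      ultimately show ?thesis by metis
    qed
  qed
  obtain S1 where S1: "S1 \<in> nsets Hs (r+1)" "f (\<phi> x) (\<phi> ` e1) = ent S1 J" using key[OF e1] by blast
  obtain S2 where S2: "S2 \<in> nsets Hs (r+1)" "f (\<phi> x) (\<phi> ` e2) = ent S2 J" using key[OF e2] by blast
  have cS: "c S1 = idx" "c S2 = idx" using mono S1(1) S2(1) by auto
  have SN: "S1 \<in> nsets {..<N} (r+1)" "S2 \<in> nsets {..<N} (r+1)"
    using S1(1) S2(1) nsets_mono[OF HsN(1)] by auto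
  have "lst S1 = lst S2"
    using cS lstL[OF SN(1)] lstL[OF SN(2)] g unfolding c_def bij_betw_def inj_on_def by metis
  moreover have "J \<in> set (List.product [0..<r+1] [0..<r+1])" using i(1) unfolding J_def by auto
  ultimately have "ent S1 J = ent S2 J" unfolding lst_def map_eq_conv by blast
  then have "f u (\<phi> ` e1) = f u (\<phi> ` e2)" using S1 S2 x by simp
  then have "\<phi> ` e1 = \<phi> ` e2" using uinj e1 e2 unfolding inj_on_def by blast
  moreover have "e1 \<subseteq> V" "e2 \<subseteq> V" using G e1 e2 unfolding r_graph_def by auto
  ultimately have "e1 = e2" using inj_on_image_eq_iff[OF inj\<phi>] by blast
  then show False using i(2) by simp
qed

theorem theorem7:
  fixes r :: nat and V :: "'a set" and E :: "'a set set"
  assumes "r \<ge> 2" and "r_graph r V E" and "V \<noteq> {}"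
  shows "(\<exists>C::nat. \<forall>n. C_r r n V E \<le> C) \<longleftrightarrow> \<not> two_locally_large r V E"
  using dir1[OF assms(2,3)] dir2[OF assms(2,3)] by blast

end
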